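(* Let $s_1,s_2,s_3\in\Sigma^n$ be such that $s_1,s_2$ are matching and $s_2,s_3$ are matching, and let $h = h_{s_1,s_2}\oplus h_{s_2,s_3}$ (position-wise XOR). (i) If $h$ contains no two consecutive $1$s, then $s_1$ and $s_3$ are matching and $h = h_{s_1,s_3}$. (ii) If $h[p-1]=h[p]=1$ for some $p$, then $s_1$ and $s_3$ are not matching, and every string $t\in\Sigma^n$ that matches both $s_1$ and $s_3$ satisfies $t[p-1..p+1] = s_2[p-1..p+1]$.
   Context: The swap at position $p$ transforms $s$ into $s[1]\cdots s[p-1]\,s[p+1]\,s[p]\,s[p+2]\cdots s[|s|]$. A swap permutation is a set of swaps at positions pairwise differing by at least $2$ (applied simultaneously). Two strings of length $n$ are matching if some swap permutation transforms one into the other. A swap permutation is valid if it never swaps two identical letters; for matching strings $u,v$ there is a unique valid swap permutation from $u$ to $v$, and $h_{u,v}$ denotes its swap string: the binary string of length $n-1$ with $h_{u,v}[p]=1$ iff this valid permutation swaps positions $(p,p+1)$. *)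

theory Defs
  imports Main
begin

text \<open>Strings of length n over an alphabet are lists of type 'a list. Positions are
0-indexed here (position p of the paper is index p-1). A swap at index p exchanges
indices p and p+1.\<close>

definition apply_swaps :: "nat set \<Rightarrow> 'a list \<Rightarrow> 'a list" where
  "apply_swaps P s = map (\<lambda>i. if i \<in> P then s ! (i+1)
                               else if 0 < i \<and> i - 1 \<in> P then s ! (i-1)
                               else s ! i) [0..<length s]"

definition swap_perm :: "nat \<Rightarrow> nat set \<Rightarrow> bool" where
  "swap_perm n P \<longleftrightarrow> (\<forall>p\<in>P. p + 1 < n) \<and>
     (\<forall>p\<in>P. \<forall>q\<in>P. p \<noteq> q \<longrightarrow> p + 2 \<le> q \<or> q + 2 \<le> p)"

definition matching :: "'a list \<Rightarrow> 'a list \<Rightarrow> bool" where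
  "matching u v \<longleftrightarrow> length u = length v \<and>
     (\<exists>P. swap_perm (length u) P \<and> apply_swaps P u = v)"

definition valid_swaps :: "nat set \<Rightarrow> 'a list \<Rightarrow> bool" where
  "valid_swaps P u \<longleftrightarrow> (\<forall>p\<in>P. u ! p \<noteq> u ! (p+1))"

definition valid_perm :: "'a list \<Rightarrow> 'a list \<Rightarrow> nat set" where
  "valid_perm u v = (THE P. swap_perm (length u) P \<and> valid_swaps P u \<and> apply_swaps P u = v)"

definition swap_string :: "'a list \<Rightarrow> 'a list \<Rightarrow> bool list" where
  "swap_string u v = map (\<lambda>p. p \<in> valid_perm u v) [0..<length u - 1]"

definition xor_list :: "bool list \<Rightarrow> bool list \<Rightarrow> bool list" where
  "xor_list a b = map2 (\<noteq>) a b"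

end

theory Submission
  imports Defs "HOL-Library.Multiset"
begin

definition sg :: "nat set \<Rightarrow> nat \<Rightarrow> nat" where
  "sg P i = (if i \<in> P then Suc i else if 0 < i \<and> i - 1 \<in> P then i - 1 else i)"

lemma len_apply[simp]: "length (apply_swaps P s) = length s"
  by (simp add: apply_swaps_def)

lemma nth_apply: "i < length s \<Longrightarrow> apply_swaps P s ! i = s ! sg P i"
  by (simp add: apply_swaps_def sg_def)

lemma sp_lt: "swap_perm n P \<Longrightarrow> p \<in> P \<Longrightarrow> Suc p < n"
  by (simp add: swap_perm_def)

lemma sp_next: "swap_perm n P \<Longrightarrow> p \<in> P \<Longrightarrow> Suc p \<notin> P"
  unfolding swap_perm_def by force

lemma sp_prev: "swap_perm n P \<Longrightarrow> p \<in> P \<Longrightarrow> 0 < p \<Longrightarrow> p - 1 \<notin> P"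
  unfolding swap_perm_def by force

lemma sg_lt: "swap_perm n P \<Longrightarrow> i < n \<Longrightarrow> sg P i < n"
  unfolding sg_def using sp_lt by fastforce

lemma sg_sg: "swap_perm n P \<Longrightarrow> sg P (sg P i) = i"
  unfolding sg_def using sp_next sp_prev
  by (smt (verit, ccfv_threshold) Suc_pred diff_Suc_1 zero_less_Suc)

lemma apply_invol:
  assumes "swap_perm (length s) P"
  shows "apply_swaps P (apply_swaps P s) = s"
proof (rule nth_equalityI)
  fix i assume "i < length (apply_swaps P (apply_swaps P s))"
  then have i: "i < length s" by simp
  show "apply_swaps P (apply_swaps P s) ! i = s ! i"
    using i sg_lt[OF assms i] by (simp add: nth_apply sg_sg[OF assms])
qed simp

lemma matching_valid:
  assumes "matching u v"
  shows "\<exists>P. swap_perm (length u) P \<and> valid_swaps P u \<and> apply_swaps P u = v"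
proof -
  obtain P where P: "swap_perm (length u) P" "apply_swaps P u = v"
    using assms unfolding matching_def by blast
  define P' where "P' = {p\<in>P. u ! p \<noteq> u ! Suc p}"
  have sp: "swap_perm (length u) P'" using P(1) unfolding swap_perm_def P'_def by auto
  have va: "valid_swaps P' u" unfolding valid_swaps_def P'_def by auto
  have "apply_swaps P' u = apply_swaps P u"
  proof (rule nth_equalityI)
    fix i assume "i < length (apply_swaps P' u)"
    then have i: "i < length u" by simp
    have "u ! sg P' i = u ! sg P i"
      unfolding sg_def P'_def using sp_next[OF P(1)] sp_prev[OF P(1)]
      by (cases "i \<in> P"; cases "0 < i \<and> i - 1 \<in> P") auto
    then show "apply_swaps P' u ! i = apply_swaps P u ! i" using i by (simp add: nth_apply)
  qed simp
  then show ?thesis using sp va P(2) by auto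
qed

lemma uniq_aux:
  assumes "swap_perm (length u) P" "swap_perm (length u) Q" "valid_swaps P u"
    "apply_swaps P u = apply_swaps Q u" "p \<in> P" "p \<notin> Q" "\<forall>j<p. (j \<in> P) = (j \<in> Q)"
  shows False
proof -
  have p1: "Suc p < length u" using sp_lt[OF assms(1) assms(5)] .
  have "apply_swaps P u ! p = u ! Suc p" using p1 by (simp add: nth_apply sg_def assms(5))
  moreover have "sg Q p = p"
    using assms(5,6,7) sp_prev[OF assms(1) assms(5)] unfolding sg_def by auto
  then have "apply_swaps Q u ! p = u ! p" using p1 by (simp add: nth_apply)
  ultimately have "u ! p = u ! Suc p" using assms(4) by simp
  then show False using assms(3,5) unfolding valid_swaps_def by auto
qed

lemma uniq:
  assumes "swap_perm (length u) P" "swap_perm (length u) Q" "valid_swaps P u" "valid_swaps Q u"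
    "apply_swaps P u = apply_swaps Q u"
  shows "P = Q"
proof (rule ccontr)
  assume "P \<noteq> Q"
  then have "\<exists>p. (p \<in> P) \<noteq> (p \<in> Q)" by blast
  then obtain p where p: "(p \<in> P) \<noteq> (p \<in> Q)" "\<forall>j<p. (j \<in> P) = (j \<in> Q)"
    using exists_least_iff[of "\<lambda>p. (p \<in> P) \<noteq> (p \<in> Q)"] by blast
  show False
  proof (cases "p \<in> P")
    case True
    then show ?thesis using uniq_aux[OF assms(1,2,3,5)] p by blast
  next
    case False
    then show ?thesis using uniq_aux[OF assms(2,1,4) assms(5)[symmetric]] p by blast
  qed
qed

lemma valid_perm_spec:
  assumes "matching u v"
  shows "swap_perm (length u) (valid_perm u v) \<and> valid_swaps (valid_perm u v) u
          \<and> apply_swaps (valid_perm u v) u = v"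
proof -
  have "\<exists>!P. swap_perm (length u) P \<and> valid_swaps P u \<and> apply_swaps P u = v"
    using matching_valid[OF assms] uniq by metis
  then show ?thesis unfolding valid_perm_def by (rule theI')
qed

lemma valid_perm_eq:
  assumes "swap_perm (length u) P" "valid_swaps P u" "apply_swaps P u = v"
  shows "valid_perm u v = P"
  unfolding valid_perm_def
  apply (rule the_equality)
  using assms uniq apply auto
  done

lemma prefix_mset:
  assumes sp: "swap_perm (length u) P"
  shows "k \<le> length u \<Longrightarrow> (if 0 < k \<and> k - 1 \<in> P
     then mset (take k (apply_swaps P u)) + {#u ! (k-1)#} = mset (take k u) + {#u ! k#}
     else mset (take k (apply_swaps P u)) = mset (take k u))"
proof (induction k)
  case 0
  then show ?case by simp
next
  case (Suc k)
  then have k: "k < length u" by simp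
  have IH: "(if 0 < k \<and> k - 1 \<in> P
     then mset (take k (apply_swaps P u)) + {#u ! (k-1)#} = mset (take k u) + {#u ! k#}
     else mset (take k (apply_swaps P u)) = mset (take k u))" using Suc by simp
  have tv: "mset (take (Suc k) (apply_swaps P u)) = add_mset (apply_swaps P u ! k) (mset (take k (apply_swaps P u)))"
    using k by (simp add: take_Suc_conv_app_nth)
  have tu: "mset (take (Suc k) u) = add_mset (u ! k) (mset (take k u))"
    using k by (simp add: take_Suc_conv_app_nth)
  show ?case
  proof (cases "k \<in> P")
    case True
    have "\<not> (0 < k \<and> k - 1 \<in> P)" using sp_prev[OF sp True] by auto
    then have e: "mset (take k (apply_swaps P u)) = mset (take k u)" using IH by simp
    have "apply_swaps P u ! k = u ! Suc k" using k True by (simp add: nth_apply sg_def)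
    then show ?thesis using True tv tu e by simp
  next
    case False
    show ?thesis
    proof (cases "0 < k \<and> k - 1 \<in> P")
      case True
      then have e: "mset (take k (apply_swaps P u)) + {#u ! (k-1)#} = mset (take k u) + {#u ! k#}"
        using IH by simp
      have "apply_swaps P u ! k = u ! (k-1)" using k True False by (simp add: nth_apply sg_def)
      then show ?thesis using False tv tu e by simp
    next
      case F2: False
      then have e: "mset (take k (apply_swaps P u)) = mset (take k u)" using IH by simp
      have "apply_swaps P u ! k = u ! k" using k F2 False by (auto simp add: nth_apply sg_def)
      then show ?thesis using False F2 tv tu e by auto
    qed
  qed
qed


lemma pm_at:
  assumes "swap_perm (length u) P" "Suc k \<le> length u"
  shows "k \<in> P \<Longrightarrow> mset (take (Suc k) (apply_swaps P u)) + {#u ! k#} = mset (take (Suc k) u) + {#u ! Suc k#}"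
    and "k \<notin> P \<Longrightarrow> mset (take (Suc k) (apply_swaps P u)) = mset (take (Suc k) u)"
  using prefix_mset[OF assms(1) assms(2)] by auto

lemma core:
  assumes spP: "swap_perm n P" and spQ: "swap_perm n Q" and spC: "swap_perm n C" and spD: "swap_perm n D"
    and len: "length s = n"
    and vP: "s ! q \<noteq> s ! Suc q" and vQ: "s ! Suc q \<noteq> s ! Suc (Suc q)"
    and qP: "q \<in> P" and qQ: "Suc q \<in> Q"
    and x: "x = apply_swaps P s" and y: "y = apply_swaps Q s"
    and tC: "apply_swaps C x = t" and tD: "apply_swaps D y = t"
  shows "t ! q = s ! q \<and> t ! Suc q = s ! Suc q \<and> t ! Suc (Suc q) = s ! Suc (Suc q)
         \<and> x ! q \<noteq> s ! q \<and> y ! Suc q \<noteq> s ! Suc q"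
proof -
  have n2: "Suc (Suc q) < n" using sp_lt[OF spQ qQ] .
  have lx: "length x = n" and ly: "length y = n" using x y len by auto
  have qQ': "q \<notin> Q" using sp_prev[OF spQ qQ] by simp
  have sqP: "Suc q \<notin> P" using sp_next[OF spP qP] .
  have ssqQ: "Suc (Suc q) \<notin> Q" using sp_next[OF spQ qQ] .
  have xq: "x ! q = s ! Suc q" using x qP n2 len by (simp add: nth_apply sg_def)
  have xsq: "x ! Suc q = s ! q" using x qP sqP n2 len by (simp add: nth_apply sg_def)
  have ysq: "y ! Suc q = s ! Suc (Suc q)" using y qQ n2 len by (simp add: nth_apply sg_def)
  have yssq: "y ! Suc (Suc q) = s ! Suc q" using y qQ ssqQ n2 len by (simp add: nth_apply sg_def)
  have P1: "mset (take (Suc q) x) + {#s ! q#} = mset (take (Suc q) s) + {#s ! Suc q#}"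
    using pm_at(1)[of s P q] spP len n2 qP x by auto
  have Q1: "mset (take (Suc q) y) = mset (take (Suc q) s)"
    using pm_at(2)[of s Q q] spQ len n2 qQ' y by auto
  have P2: "mset (take (Suc (Suc q)) x) = mset (take (Suc (Suc q)) s)"
    using pm_at(2)[of s P "Suc q"] spP len n2 sqP x by auto
  have Q2: "mset (take (Suc (Suc q)) y) + {#s ! Suc q#} = mset (take (Suc (Suc q)) s) + {#s ! Suc (Suc q)#}"
    using pm_at(1)[of s Q "Suc q"] spQ len n2 qQ y by auto
  have qC: "q \<in> C"
  proof (rule ccontr)
    assume nC: "q \<notin> C"
    have C1: "mset (take (Suc q) t) = mset (take (Suc q) x)"
      using pm_at(2)[of x C q] spC lx n2 nC tC by auto
    let ?b = "s ! Suc q"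
    have c1: "count (mset (take (Suc q) x)) ?b = count (mset (take (Suc q) s)) ?b + 1"
      using arg_cong[OF P1, of "\<lambda>M. count M ?b"] vP by simp
    show False
    proof (cases "q \<in> D")
      case True
      have D1: "mset (take (Suc q) t) + {#y ! q#} = mset (take (Suc q) y) + {#y ! Suc q#}"
        using pm_at(1)[of y D q] spD ly n2 True tD by auto
      have "count (mset (take (Suc q) t) + {#y ! q#}) ?b = count (mset (take (Suc q) y) + {#y ! Suc q#}) ?b"
        using D1 by simp
      then have "count (mset (take (Suc q) x)) ?b \<le> count (mset (take (Suc q) s)) ?b"
        using C1 Q1 ysq vQ by (simp split: if_splits)
      then show False using c1 by simp
    next
      case False
      have "mset (take (Suc q) t) = mset (take (Suc q) y)"
        using pm_at(2)[of y D q] spD ly n2 False tD by auto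
      then show False using c1 C1 Q1 by simp
    qed
  qed
  have sqC: "Suc q \<notin> C" using sp_next[OF spC qC] .
  have sqD: "Suc q \<in> D"
  proof (rule ccontr)
    assume nD: "Suc q \<notin> D"
    have "mset (take (Suc (Suc q)) t) = mset (take (Suc (Suc q)) y)"
      using pm_at(2)[of y D "Suc q"] spD ly n2 nD tD by auto
    moreover have "mset (take (Suc (Suc q)) t) = mset (take (Suc (Suc q)) x)"
      using pm_at(2)[of x C "Suc q"] spC lx n2 sqC tC by auto
    ultimately have "mset (take (Suc (Suc q)) y) = mset (take (Suc (Suc q)) s)" using P2 by simp
    then show False using Q2 vQ by simp
  qed
  have ssqD: "Suc (Suc q) \<notin> D" using sp_next[OF spD sqD] .
  have "t ! q = x ! Suc q" using tC qC n2 lx by (auto simp: nth_apply sg_def)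
  moreover have "t ! Suc q = x ! q" using tC qC sqC n2 lx by (auto simp: nth_apply sg_def)
  moreover have "t ! Suc (Suc q) = y ! Suc q" using tD sqD ssqD n2 ly by (auto simp: nth_apply sg_def)
  ultimately show ?thesis using xq xsq ysq yssq vP vQ by auto
qed


lemma apply_empty: "apply_swaps {} s = s"
  by (rule nth_equalityI) (auto simp: nth_apply sg_def)

lemma matching_refl: "matching s s"
  unfolding matching_def swap_perm_def using apply_empty by blast

lemma matching_back:
  assumes "matching t u"
  obtains C where "swap_perm (length u) C" "apply_swaps C u = t"
proof -
  obtain C where C: "swap_perm (length t) C" "apply_swaps C t = u"
    using assms unfolding matching_def by blast
  then have "length u = length t" by auto
  then show ?thesis using that[of C] C apply_invol[OF C(1)] by auto
qed

lemma compose_sg: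
  assumes spA: "swap_perm n A" and spB: "swap_perm n B"
    and nc: "\<forall>p. \<not> (((p \<in> A) \<noteq> (p \<in> B)) \<and> ((Suc p \<in> A) \<noteq> (Suc p \<in> B)))"
  shows "sg A (sg B i) = sg {p. (p \<in> A) \<noteq> (p \<in> B)} i"
proof -
  have a1: "\<And>p. p \<in> A \<Longrightarrow> Suc p \<notin> A" using sp_next[OF spA] by blast
  have b1: "\<And>p. p \<in> B \<Longrightarrow> Suc p \<notin> B" using sp_next[OF spB] by blast
  show ?thesis
  proof (cases i)
    case 0
    then show ?thesis using a1 b1 nc[rule_format, of 0] by (auto simp: sg_def)
  next
    case (Suc j)
    note ncs = nc[rule_format, of j] nc[rule_format, of "Suc j"]
    show ?thesis
    proof (cases j)
      case 0
      then show ?thesis using Suc a1 b1 ncs unfolding sg_def by auto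
    next
      case (Suc k)
      then show ?thesis using \<open>i = Suc j\<close> a1[of k] b1[of k] a1[of j] b1[of j] a1[of i] b1[of i]
          ncs nc[rule_format, of k] unfolding sg_def by auto
    qed
  qed
qed

theorem mainTheorem2:
  fixes s1 s2 s3 :: "'a list" and n :: nat
  assumes "length s1 = n" and "length s2 = n" and "length s3 = n"
    and "matching s1 s2" and "matching s2 s3"
  defines "h \<equiv> xor_list (swap_string s1 s2) (swap_string s2 s3)"
  shows "((\<forall>q. q + 1 < length h \<longrightarrow> \<not> (h ! q \<and> h ! (q+1)))
            \<longrightarrow> matching s1 s3 \<and> h = swap_string s1 s3)
       \<and> (\<forall>q. q + 1 < length h \<and> h ! q \<and> h ! (q+1) \<longrightarrow>
            \<not> matching s1 s3 \<and>
            (\<forall>t :: 'a list. length t = n \<and> matching t s1 \<and> matching t s3 \<longrightarrow>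
               (\<forall>i\<in>{q..q+2}. t ! i = s2 ! i)))"
proof -
  define A where "A = valid_perm s1 s2"
  define B where "B = valid_perm s2 s3"
  have spA: "swap_perm n A" and vA: "valid_swaps A s1" and aA: "apply_swaps A s1 = s2"
    using valid_perm_spec[OF assms(4)] assms(1) unfolding A_def by auto
  have spB: "swap_perm n B" and vB: "valid_swaps B s2" and aB: "apply_swaps B s2 = s3"
    using valid_perm_spec[OF assms(5)] assms(2) unfolding B_def by auto
  have aA': "apply_swaps A s2 = s1" using apply_invol[of s1 A] spA aA assms(1) by auto
  have lh: "length h = n - 1" unfolding h_def xor_list_def swap_string_def using assms(1,2) by simp
  have hq: "\<And>q. q < n - 1 \<Longrightarrow> h ! q = ((q \<in> A) \<noteq> (q \<in> B))"
    unfolding h_def xor_list_def swap_string_def A_def B_def using assms(1,2) by simp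
  have Alt: "\<And>p. p \<in> A \<Longrightarrow> p < n - 1" using sp_lt[OF spA] by fastforce
  have Blt: "\<And>p. p \<in> B \<Longrightarrow> p < n - 1" using sp_lt[OF spB] by fastforce
  have part1: "matching s1 s3 \<and> h = swap_string s1 s3"
    if nc0: "\<forall>q. q + 1 < length h \<longrightarrow> \<not> (h ! q \<and> h ! (q+1))"
  proof -
    define H where "H = {p. (p \<in> A) \<noteq> (p \<in> B)}"
    have nc: "\<forall>p. \<not> (((p \<in> A) \<noteq> (p \<in> B)) \<and> ((Suc p \<in> A) \<noteq> (Suc p \<in> B)))"
    proof (intro allI notI)
      fix p assume pp: "((p \<in> A) \<noteq> (p \<in> B)) \<and> ((Suc p \<in> A) \<noteq> (Suc p \<in> B))"
      then have "Suc p < n - 1" using Alt Blt by blast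
      then show False using nc0[rule_format, of p] hq[of p] hq[of "Suc p"] pp lh by auto
    qed
    have spH: "swap_perm n H"
      unfolding swap_perm_def
    proof (intro conjI ballI impI)
      fix p assume "p \<in> H" then show "p + 1 < n" using sp_lt[OF spA] sp_lt[OF spB] unfolding H_def by auto
    next
      fix p q assume "p \<in> H" "q \<in> H" "p \<noteq> q"
      moreover have "q \<noteq> Suc p" using nc[rule_format, of p] \<open>p \<in> H\<close> \<open>q \<in> H\<close> unfolding H_def by auto
      moreover have "p \<noteq> Suc q" using nc[rule_format, of q] \<open>p \<in> H\<close> \<open>q \<in> H\<close> unfolding H_def by auto
      ultimately show "p + 2 \<le> q \<or> q + 2 \<le> p" by linarith
    qed
    have sgle: "\<And>i. i < n \<Longrightarrow> sg B i < n" using sg_lt[OF spB] .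
    have aH: "apply_swaps H s1 = s3"
    proof (rule nth_equalityI)
      show "length (apply_swaps H s1) = length s3" using assms by simp
    next
      fix i assume "i < length (apply_swaps H s1)"
      then have i: "i < n" using assms by simp
      have "s3 ! i = s2 ! sg B i" using aB[symmetric] i assms(2) by (simp add: nth_apply)
      also have "\<dots> = s1 ! sg A (sg B i)" using aA[symmetric] sgle[OF i] assms(1) by (simp add: nth_apply)
      also have "\<dots> = s1 ! sg H i" using compose_sg[OF spA spB nc] H_def by simp
      finally show "apply_swaps H s1 ! i = s3 ! i" using i assms(1) by (simp add: nth_apply)
    qed
    have vH: "valid_swaps H s1"
      unfolding valid_swaps_def
    proof
      fix p assume pH: "p \<in> H"
      show "s1 ! p \<noteq> s1 ! (p + 1)"
      proof (cases "p \<in> A")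
        case True then show ?thesis using vA unfolding valid_swaps_def by auto
      next
        case False
        then have pB: "p \<in> B" using pH H_def by auto
        have p1: "Suc p < n" using sp_lt[OF spB pB] .
        have "s2 ! p \<noteq> s2 ! Suc p" using vB pB unfolding valid_swaps_def by auto
        moreover have "s2 ! p = s1 ! p"
          using aA[symmetric] p1 assms(1) False nc[rule_format, of "p - 1"] pB sp_prev[OF spB pB]
          by (cases p) (auto simp: nth_apply sg_def)
        moreover have "s2 ! Suc p = s1 ! Suc p"
          using aA[symmetric] p1 assms(1) False nc[rule_format, of p] pB sp_next[OF spB pB]
          by (auto simp: nth_apply sg_def)
        ultimately show ?thesis by simp
      qed
    qed
    have vp: "valid_perm s1 s3 = H" using valid_perm_eq[of s1 H s3] spH vH aH assms(1) by simp
    have m: "matching s1 s3" unfolding matching_def using spH aH assms by auto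
    have "h = swap_string s1 s3"
      by (rule nth_equalityI) (auto simp: lh swap_string_def vp assms(1) hq H_def)
    then show ?thesis using m by simp
  qed
  have part2: "\<not> matching s1 s3 \<and>
            (\<forall>t :: 'a list. length t = n \<and> matching t s1 \<and> matching t s3 \<longrightarrow>
               (\<forall>i\<in>{q..q+2}. t ! i = s2 ! i))"
    if qh: "q + 1 < length h" "h ! q" "h ! (q+1)" for q
  proof -
    have hq1: "(q \<in> A) \<noteq> (q \<in> B)" using qh hq[of q] lh by auto
    have hq2: "(Suc q \<in> A) \<noteq> (Suc q \<in> B)" using qh hq[of "Suc q"] lh by auto
    have key: "\<forall>t. matching t s1 \<and> matching t s3 \<longrightarrow>
       t ! q = s2 ! q \<and> t ! Suc q = s2 ! Suc q \<and> t ! Suc (Suc q) = s2 ! Suc (Suc q)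
       \<and> (s1 ! q \<noteq> s2 ! q \<or> s1 ! Suc q \<noteq> s2 ! Suc q)"
    proof (intro allI impI)
      fix t assume mt: "matching t s1 \<and> matching t s3"
      obtain C where C: "swap_perm (length s1) C" "apply_swaps C s1 = t"
        using mt matching_back by blast
      obtain D where D: "swap_perm (length s3) D" "apply_swaps D s3 = t"
        using mt matching_back by blast
      show "t ! q = s2 ! q \<and> t ! Suc q = s2 ! Suc q \<and> t ! Suc (Suc q) = s2 ! Suc (Suc q)
       \<and> (s1 ! q \<noteq> s2 ! q \<or> s1 ! Suc q \<noteq> s2 ! Suc q)"
      proof (cases "q \<in> A")
        case True
        have sqA: "Suc q \<notin> A" using sp_next[OF spA True] .
        have sqB: "Suc q \<in> B" using hq2 sqA by simp
        have n2: "Suc (Suc q) < n" using sp_lt[OF spB sqB] .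
        have vP: "s2 ! q \<noteq> s2 ! Suc q"
        proof -
          have "s1 ! q \<noteq> s1 ! Suc q" using vA True unfolding valid_swaps_def by auto
          moreover have "s2 ! q = s1 ! Suc q" "s2 ! Suc q = s1 ! q"
            using aA[symmetric] True sqA n2 assms(1) by (auto simp: nth_apply sg_def)
          ultimately show ?thesis by simp
        qed
        have vQ: "s2 ! Suc q \<noteq> s2 ! Suc (Suc q)" using vB sqB unfolding valid_swaps_def by auto
        show ?thesis
          using core[OF spA spB _ _ assms(2) vP vQ True sqB aA'[symmetric] aB[symmetric] C(2) D(2)]
            C(1) D(1) assms by auto
      next
        case False
        have qB: "q \<in> B" using hq1 False by simp
        have sqB: "Suc q \<notin> B" using sp_next[OF spB qB] .
        have sqA: "Suc q \<in> A" using hq2 sqB by simp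
        have n2: "Suc (Suc q) < n" using sp_lt[OF spA sqA] .
        have vQ: "s2 ! Suc q \<noteq> s2 ! Suc (Suc q)"
        proof -
          have "s1 ! Suc q \<noteq> s1 ! Suc (Suc q)" using vA sqA unfolding valid_swaps_def by auto
          moreover have "s2 ! Suc q = s1 ! Suc (Suc q)" "s2 ! Suc (Suc q) = s1 ! Suc q"
            using aA[symmetric] sqA sp_next[OF spA sqA] n2 assms(1) by (auto simp: nth_apply sg_def)
          ultimately show ?thesis by simp
        qed
        have vP: "s2 ! q \<noteq> s2 ! Suc q" using vB qB unfolding valid_swaps_def by auto
        show ?thesis
          using core[OF spB spA _ _ assms(2) vP vQ qB sqA aB[symmetric] aA'[symmetric] D(2) C(2)]
            C(1) D(1) assms by auto
      qed
    qed
    have nm: "\<not> matching s1 s3"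
    proof
      assume "matching s1 s3"
      then show False using key[rule_format, of s1] matching_refl[of s1] by auto
    qed
    have "\<forall>t :: 'a list. length t = n \<and> matching t s1 \<and> matching t s3 \<longrightarrow>
               (\<forall>i\<in>{q..q+2}. t ! i = s2 ! i)"
    proof (intro allI impI ballI)
      fix t :: "'a list" and i
      assume "length t = n \<and> matching t s1 \<and> matching t s3" "i \<in> {q..q+2}"
      then have "i = q \<or> i = Suc q \<or> i = Suc (Suc q)" "matching t s1 \<and> matching t s3" by auto
      then show "t ! i = s2 ! i" using key by blast
    qed
    then show ?thesis using nm by simp
  qed
  show ?thesis using part1 part2 by blast
qed

end
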